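(* Let $\sigma_N$ be a preference profile of $n$ metrics over $m$ alternatives, let $\epsilon\ge0$, and let $K\subseteq N$ be a nonempty subset satisfying $\epsilon$-positional proportionality. Then for every score vector $s$ and every alternative $a\in A$, $$\left|f_s(a,\sigma_N)-f_s(a,\sigma_K)\right|\le\epsilon.$$
   Context: Let $N=[n]$ be a set of metrics and $A=[m]$ a set of alternatives. Each metric $i\in N$ has a ranking $\sigma_i$ of $A$; $\sigma_i(a)$ is the position of $a$ (1 is best). For $K\subseteq N$ write $\sigma_K=\{\sigma_i:i\in K\}$. For $K\subseteq N$, $r\in[m]$, $a\in A$, let $C(K,r,a)=|\{i\in K:\sigma_i(a)\le r\}|$. A nonempty $K\subseteq N$ satisfies $\epsilon$-positional proportionality if for all $a\in A$ and $r\in[m]$, $\left|\frac{C(N,r,a)}{|N|}-\frac{C(K,r,a)}{|K|}\right|\le\epsilon$. A scoring rule is given by a score vector $s\in\mathbb{R}^m$ with $s_1\ge s_2\ge\dots\ge s_m$, normalized so that $s_1=1$ and $s_m=0$. For a nonempty $K\subseteq N$, the average score of $a$ is $f_s(a,\sigma_K)=\frac{1}{|K|}\sum_{i\in K}s_{\sigma_i(a)}$. *)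

theory Defs
  imports "HOL-Analysis.Analysis"
begin

text \<open>Metrics are N = {0..<n}, alternatives A = {0..<m}. A profile assigns to each
metric i a ranking sigma i, a bijection from A onto positions {1..m} (1 is best).\<close>

definition is_ranking :: "nat \<Rightarrow> (nat \<Rightarrow> nat) \<Rightarrow> bool" where
  "is_ranking m r \<longleftrightarrow> bij_betw r {0..<m} {1..m}"

definition is_profile :: "nat \<Rightarrow> nat \<Rightarrow> (nat \<Rightarrow> nat \<Rightarrow> nat) \<Rightarrow> bool" where
  "is_profile n m \<sigma> \<longleftrightarrow> (\<forall>i\<in>{0..<n}. is_ranking m (\<sigma> i))"

definition cnt :: "(nat \<Rightarrow> nat \<Rightarrow> nat) \<Rightarrow> nat set \<Rightarrow> nat \<Rightarrow> nat \<Rightarrow> nat" where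
  "cnt \<sigma> K r a = card {i\<in>K. \<sigma> i a \<le> r}"

definition pos_prop :: "nat \<Rightarrow> nat \<Rightarrow> (nat \<Rightarrow> nat \<Rightarrow> nat) \<Rightarrow> real \<Rightarrow> nat set \<Rightarrow> bool" where
  "pos_prop n m \<sigma> \<epsilon> K \<longleftrightarrow> K \<noteq> {} \<and> K \<subseteq> {0..<n} \<and>
     (\<forall>a\<in>{0..<m}. \<forall>r\<in>{1..m}.
        \<bar>real (cnt \<sigma> {0..<n} r a) / real n - real (cnt \<sigma> K r a) / real (card K)\<bar> \<le> \<epsilon>)"

definition score_vector :: "nat \<Rightarrow> (nat \<Rightarrow> real) \<Rightarrow> bool" where
  "score_vector m s \<longleftrightarrow> (\<forall>j\<in>{1..m}. \<forall>k\<in>{1..m}. j \<le> k \<longrightarrow> s k \<le> s j) \<and> s 1 = 1 \<and> s m = 0"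

definition avg_score :: "(nat \<Rightarrow> real) \<Rightarrow> (nat \<Rightarrow> nat \<Rightarrow> nat) \<Rightarrow> nat set \<Rightarrow> nat \<Rightarrow> real" where
  "avg_score s \<sigma> K a = (\<Sum>i\<in>K. s (\<sigma> i a)) / real (card K)"

end

theory Submission
  imports Defs
begin

lemma tele:
  fixes s :: "nat \<Rightarrow> real"
  assumes "p \<in> {1..m}" "s m = 0"
  shows "s p = (\<Sum>r\<in>{1..<m}. (s r - s (Suc r)) * (if p \<le> r then 1 else 0))"
proof -
  have "(\<Sum>r\<in>{1..<m}. (s r - s (Suc r)) * (if p \<le> r then 1 else 0))
        = (\<Sum>r\<in>{p..<m}. (s r - s (Suc r)))"
    using assms(1) by (intro sum.mono_neutral_cong_right) auto
  also have "\<dots> = - (\<Sum>r\<in>{p..<m}. (s (Suc r) - s r))"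
    by (simp add: sum_negf[symmetric])
  also have "\<dots> = s p - s m" using assms(1) by (subst sum_Suc_diff') auto
  finally show ?thesis using assms by simp
qed

lemma avg_expand:
  fixes s :: "nat \<Rightarrow> real"
  assumes "finite K" "\<forall>i\<in>K. \<sigma> i a \<in> {1..m}" "s m = 0"
  shows "avg_score s \<sigma> K a = (\<Sum>r\<in>{1..<m}. (s r - s (Suc r)) * (real (cnt \<sigma> K r a) / real (card K)))"
proof -
  have "(\<Sum>i\<in>K. s (\<sigma> i a)) = (\<Sum>i\<in>K. \<Sum>r\<in>{1..<m}. (s r - s (Suc r)) * (if \<sigma> i a \<le> r then 1 else 0))"
    using assms by (intro sum.cong refl tele) auto
  also have "\<dots> = (\<Sum>r\<in>{1..<m}. \<Sum>i\<in>K. (s r - s (Suc r)) * (if \<sigma> i a \<le> r then 1 else 0))"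
    by (rule sum.swap)
  also have "\<dots> = (\<Sum>r\<in>{1..<m}. (s r - s (Suc r)) * real (cnt \<sigma> K r a))"
  proof (intro sum.cong refl)
    fix r
    have "(\<Sum>i\<in>K. (s r - s (Suc r)) * (if \<sigma> i a \<le> r then 1 else 0))
        = (s r - s (Suc r)) * (\<Sum>i\<in>K. (if \<sigma> i a \<le> r then 1 else 0))"
      by (simp add: sum_distrib_left)
    also have "(\<Sum>i\<in>K. (if \<sigma> i a \<le> r then 1 else 0::real)) = real (cnt \<sigma> K r a)"
      unfolding cnt_def using assms(1) by (simp add: sum.If_cases Int_def)
    finally show "(\<Sum>i\<in>K. (s r - s (Suc r)) * (if \<sigma> i a \<le> r then 1 else 0))
        = (s r - s (Suc r)) * real (cnt \<sigma> K r a)" .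
  qed
  finally show ?thesis unfolding avg_score_def by (simp add: sum_divide_distrib)
qed

theorem theorem5:
  fixes n m :: nat and \<sigma> :: "nat \<Rightarrow> nat \<Rightarrow> nat" and \<epsilon> :: real and K :: "nat set"
    and s :: "nat \<Rightarrow> real" and a :: nat
  assumes "n \<ge> 1"
    and "is_profile n m \<sigma>"
    and "\<epsilon> \<ge> 0"
    and "pos_prop n m \<sigma> \<epsilon> K"
    and "score_vector m s"
    and "a \<in> {0..<m}"
  shows "\<bar>avg_score s \<sigma> {0..<n} a - avg_score s \<sigma> K a\<bar> \<le> \<epsilon>"
proof -
  have KN: "K \<subseteq> {0..<n}" and pp: "\<forall>a\<in>{0..<m}. \<forall>r\<in>{1..m}.
        \<bar>real (cnt \<sigma> {0..<n} r a) / real n - real (cnt \<sigma> K r a) / real (card K)\<bar> \<le> \<epsilon>"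
    using assms(4) unfolding pos_prop_def by auto
  have sv: "\<forall>j\<in>{1..m}. \<forall>k\<in>{1..m}. j \<le> k \<longrightarrow> s k \<le> s j" "s 1 = 1" "s m = 0"
    using assms(5) unfolding score_vector_def by auto
  have rng: "\<forall>i\<in>{0..<n}. \<sigma> i a \<in> {1..m}"
    proof
    fix i assume i: "i \<in> {0..<n}"
    then have "bij_betw (\<sigma> i) {0..<m} {1..m}" using assms(2) unfolding is_profile_def is_ranking_def by auto
    then show "\<sigma> i a \<in> {1..m}" using assms(6) bij_betwE by blast
  qed
  have fK: "finite K" using KN finite_subset by blast
  let ?d = "\<lambda>r. s r - s (Suc r)"
  have e1: "avg_score s \<sigma> {0..<n} a = (\<Sum>r\<in>{1..<m}. ?d r * (real (cnt \<sigma> {0..<n} r a) / real n))"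
    using avg_expand[of "{0..<n}" \<sigma> a m s] rng sv by simp
  have e2: "avg_score s \<sigma> K a = (\<Sum>r\<in>{1..<m}. ?d r * (real (cnt \<sigma> K r a) / real (card K)))"
    using avg_expand[of K \<sigma> a m s] rng sv fK KN by auto
  have "\<bar>avg_score s \<sigma> {0..<n} a - avg_score s \<sigma> K a\<bar>
      = \<bar>\<Sum>r\<in>{1..<m}. ?d r * (real (cnt \<sigma> {0..<n} r a) / real n - real (cnt \<sigma> K r a) / real (card K))\<bar>"
    unfolding e1 e2 by (simp add: sum_subtractf[symmetric] right_diff_distrib)
  also have "\<dots> \<le> (\<Sum>r\<in>{1..<m}. \<bar>?d r * (real (cnt \<sigma> {0..<n} r a) / real n - real (cnt \<sigma> K r a) / real (card K))\<bar>)"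
    by (rule sum_abs)
  also have "\<dots> \<le> (\<Sum>r\<in>{1..<m}. ?d r * \<epsilon>)"
  proof (rule sum_mono)
    fix r assume r: "r \<in> {1..<m}"
    have d0: "?d r \<ge> 0" using sv(1) r by auto
    have "\<bar>real (cnt \<sigma> {0..<n} r a) / real n - real (cnt \<sigma> K r a) / real (card K)\<bar> \<le> \<epsilon>"
      using pp assms(6) r by auto
    then show "\<bar>?d r * (real (cnt \<sigma> {0..<n} r a) / real n - real (cnt \<sigma> K r a) / real (card K))\<bar> \<le> ?d r * \<epsilon>"
      using d0 by (simp add: abs_mult mult_left_mono)
  qed
  also have "\<dots> = (\<Sum>r\<in>{1..<m}. ?d r) * \<epsilon>" by (simp add: sum_distrib_right)
  also have "(\<Sum>r\<in>{1..<m}. ?d r) = s 1 - s m"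
  proof -
    have m1: "1 \<le> m" using assms(6) by auto
    have "(\<Sum>r\<in>{1..<m}. ?d r) = - (\<Sum>r\<in>{1..<m}. s (Suc r) - s r)"
      by (simp add: sum_negf[symmetric])
    also have "\<dots> = s 1 - s m" using m1 by (subst sum_Suc_diff') auto
    finally show ?thesis .
  qed
  finally show ?thesis using sv by simp
qed

end
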